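(* For all integers $2\le n\le m$, $\gamma_{2t}(K_n\Box K_m)\ge \min\{m+2,\,2n\}$. Moreover, $\gamma_{2t}(K_n\Box K_m)=2n$ whenever $m\ge 2n-2$.
   Context: For a graph $G=(V,E)$, a set $S\subseteq V$ is a total $2$-dominating set if every vertex of $V$ (including those in $S$) is adjacent to at least $2$ vertices of $S$; $\gamma_{2t}(G)$ is the minimum cardinality of such a set. $G\Box H$ denotes the Cartesian product: vertex set $V(G)\times V(H)$, with $(u_1,v_1)\sim(u_2,v_2)$ iff either $u_1=u_2$ and $v_1\sim v_2$, or $v_1=v_2$ and $u_1\sim u_2$. $K_n$ is the complete graph on $n$ vertices. *)

theory Defs
  imports Main
begin

definition total_k_dominating :: "'a set \<Rightarrow> ('a \<Rightarrow> 'a \<Rightarrow> bool) \<Rightarrow> nat \<Rightarrow> 'a set \<Rightarrow> bool" where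
  "total_k_dominating V adj k S \<longleftrightarrow>
     S \<subseteq> V \<and> (\<forall>v\<in>V. card {u\<in>S. adj v u} \<ge> k)"

definition gamma_2t :: "'a set \<Rightarrow> ('a \<Rightarrow> 'a \<Rightarrow> bool) \<Rightarrow> nat" where
  "gamma_2t V adj = (LEAST c. \<exists>S. total_k_dominating V adj 2 S \<and> card S = c)"

definition K_adj :: "nat \<Rightarrow> nat \<Rightarrow> bool" where
  "K_adj u v \<longleftrightarrow> u \<noteq> v"

definition cart_adj :: "('a \<Rightarrow> 'a \<Rightarrow> bool) \<Rightarrow> ('b \<Rightarrow> 'b \<Rightarrow> bool) \<Rightarrow> ('a \<times> 'b) \<Rightarrow> ('a \<times> 'b) \<Rightarrow> bool" where
  "cart_adj adjG adjH x y \<longleftrightarrow>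
     (fst x = fst y \<and> adjH (snd x) (snd y)) \<or> (snd x = snd y \<and> adjG (fst x) (fst y))"

definition KK_vertices :: "nat \<Rightarrow> nat \<Rightarrow> (nat \<times> nat) set" where
  "KK_vertices n m = {0..<n} \<times> {0..<m}"

end

theory Submission
  imports Defs
begin

lemma card2I: "finite X \<Longrightarrow> a \<in> X \<Longrightarrow> b \<in> X \<Longrightarrow> a \<noteq> b \<Longrightarrow> 2 \<le> card X"
  using card_mono[of X "{a,b}"] by auto

lemma nbr_sub:
  "{u\<in>S. cart_adj K_adj K_adj v u} \<subseteq> ({x\<in>S. fst x = fst v} - {v}) \<union> ({x\<in>S. snd x = snd v} - {v})"
  by (auto simp: cart_adj_def K_adj_def)

lemma nbr_le:
  assumes "finite S"
  shows "card {u\<in>S. cart_adj K_adj K_adj v u} \<le> card ({x\<in>S. fst x = fst v} - {v}) + card ({x\<in>S. snd x = snd v} - {v})"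
proof -
  have "card {u\<in>S. cart_adj K_adj K_adj v u} \<le> card (({x\<in>S. fst x = fst v} - {v}) \<union> ({x\<in>S. snd x = snd v} - {v}))"
    by (rule card_mono) (use assms nbr_sub in auto)
  also have "\<dots> \<le> card ({x\<in>S. fst x = fst v} - {v}) + card ({x\<in>S. snd x = snd v} - {v})" by (rule card_Un_le)
  finally show ?thesis .
qed

lemma lower:
  assumes "2 \<le> n" "n \<le> m" and T: "total_k_dominating (KK_vertices n m) (cart_adj K_adj K_adj) 2 S"
  shows "min (m + 2) (2 * n) \<le> card S"
proof -
  have SV: "S \<subseteq> {0..<n} \<times> {0..<m}" using T by (auto simp: total_k_dominating_def KK_vertices_def)
  have fin: "finite S" using SV finite_subset by blast
  have dom: "\<And>i j. i < n \<Longrightarrow> j < m \<Longrightarrow> 2 \<le> card {u\<in>S. cart_adj K_adj K_adj (i,j) u}"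
    using T by (auto simp: total_k_dominating_def KK_vertices_def)
  have rows: "card S = (\<Sum>i\<in>{0..<n}. card {x\<in>S. fst x = i})"
    proof -
    have "fst ` S \<subseteq> {0..<n}" using SV by auto
    from sum.group[OF fin _ this, of "\<lambda>_. 1::nat"] show ?thesis by simp
  qed
  have cols: "card S = (\<Sum>j\<in>{0..<m}. card {x\<in>S. snd x = j})"
    proof -
    have "snd ` S \<subseteq> {0..<m}" using SV by auto
    from sum.group[OF fin _ this, of "\<lambda>_. 1::nat"] show ?thesis by simp
  qed
  show ?thesis
  proof (cases "\<forall>i<n. 2 \<le> card {x\<in>S. fst x = i}")
    case True
    have "(\<Sum>i\<in>{0..<n}. (2::nat)) \<le> (\<Sum>i\<in>{0..<n}. card {x\<in>S. fst x = i})"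
      by (rule sum_mono) (use True in auto)
    then show ?thesis using rows by simp
  next
    case False
    then obtain i where i: "i < n" and r: "card {x\<in>S. fst x = i} \<le> 1" by force
    have finr: "finite {x\<in>S. fst x = i}" using fin by auto
    have finc: "\<And>j. finite {x\<in>S. snd x = j}" using fin by auto
    show ?thesis
    proof (cases "{x\<in>S. fst x = i} = {}")
      case True
      have "\<And>j. j < m \<Longrightarrow> 2 \<le> card {x\<in>S. snd x = j}"
      proof -
        fix j assume j: "j < m"
        have "2 \<le> card ({x\<in>S. fst x = i} - {(i,j)}) + card ({x\<in>S. snd x = j} - {(i,j)})"
          using dom[OF i j] nbr_le[OF fin, of "(i,j)"] by simp
        moreover have "card ({x\<in>S. snd x = j} - {(i,j)}) \<le> card {x\<in>S. snd x = j}"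
          by (rule card_mono) (use finc in auto)
        ultimately show "2 \<le> card {x\<in>S. snd x = j}" using True by simp
      qed
      then have "(\<Sum>j\<in>{0..<m}. (2::nat)) \<le> (\<Sum>j\<in>{0..<m}. card {x\<in>S. snd x = j})"
        by (intro sum_mono) auto
      then show ?thesis using cols assms(1,2) by simp
    next
      case False
      then obtain w where w: "w \<in> S" "fst w = i" by auto
      have rw: "{x\<in>S. fst x = i} = {w}"
      proof -
        have "card {x\<in>S. fst x = i} \<noteq> 0" using False finr by simp
        then have "card {x\<in>S. fst x = i} = 1" using r by linarith
        then obtain z where "{x\<in>S. fst x = i} = {z}" using card_1_singletonE by blast
        then show ?thesis using w by auto
      qed
      define j0 where "j0 = snd w"
      have wj: "w = (i, j0)" using w j0_def by (cases w) auto
      have j0: "j0 < m" using SV w(1) wj by auto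
      have c1: "1 \<le> card {x\<in>S. snd x = j}" if j: "j < m" for j
      proof -
        have "2 \<le> card ({x\<in>S. fst x = i} - {(i,j)}) + card ({x\<in>S. snd x = j} - {(i,j)})"
          using dom[OF i j] nbr_le[OF fin, of "(i,j)"] by simp
        moreover have "card ({x\<in>S. fst x = i} - {(i,j)}) \<le> 1"
        proof -
          have "card ({x\<in>S. fst x = i} - {(i,j)}) \<le> card {x\<in>S. fst x = i}"
            by (rule card_mono) (use finr in auto)
          then show ?thesis using r by linarith
        qed
        moreover have "card ({x\<in>S. snd x = j} - {(i,j)}) \<le> card {x\<in>S. snd x = j}"
          by (rule card_mono) (use finc in auto)
        ultimately show ?thesis by simp
      qed
      have c3: "3 \<le> card {x\<in>S. snd x = j0}"
      proof -
        have "2 \<le> card ({x\<in>S. fst x = i} - {(i,j0)}) + card ({x\<in>S. snd x = j0} - {(i,j0)})"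
          using dom[OF i j0] nbr_le[OF fin, of "(i,j0)"] by simp
        moreover have "({x\<in>S. fst x = i} - {(i,j0)}) = {}" using rw wj by auto
        moreover have "(i,j0) \<in> {x\<in>S. snd x = j0}" using w wj by auto
        moreover have "card ({x\<in>S. snd x = j0} - {(i,j0)}) = card {x\<in>S. snd x = j0} - 1"
          using calculation(3) finc[of j0] by (simp add: card_Diff_singleton)
        moreover have "card {x\<in>S. snd x = j0} \<noteq> 0" using calculation(3) finc[of j0] by auto
        ultimately show ?thesis by simp
      qed
      have "(\<Sum>j\<in>{0..<m}. card {x\<in>S. snd x = j}) = card {x\<in>S. snd x = j0} + (\<Sum>j\<in>{0..<m}-{j0}. card {x\<in>S. snd x = j})"
        using j0 by (simp add: sum.remove)
      moreover have "(\<Sum>j\<in>{0..<m}-{j0}. (1::nat)) \<le> (\<Sum>j\<in>{0..<m}-{j0}. card {x\<in>S. snd x = j})"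
        by (rule sum_mono) (use c1 in auto)
      moreover have "(\<Sum>j\<in>{0..<m}-{j0}. (1::nat)) = m - 1" using j0 by simp
      ultimately show ?thesis using cols c3 j0 by linarith
    qed
  qed
qed

lemma upper_set:
  assumes "2 \<le> n" "n \<le> m"
  shows "total_k_dominating (KK_vertices n m) (cart_adj K_adj K_adj) 2 ({0..<n} \<times> {0,1})"
  unfolding total_k_dominating_def
proof (intro conjI ballI)
  show "{0..<n} \<times> {0, 1} \<subseteq> KK_vertices n m" using assms by (auto simp: KK_vertices_def)
next
  fix v assume "v \<in> KK_vertices n m"
  then obtain i j where v: "v = (i,j)" "i < n" "j < m" by (auto simp: KK_vertices_def)
  let ?X = "{u \<in> {0..<n} \<times> {0, 1}. cart_adj K_adj K_adj v u}"
  have fx: "finite ?X" by auto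
  show "2 \<le> card ?X"
  proof (cases "j \<le> 1")
    case True
    define k where "k = (if i = 0 then 1 else 0::nat)"
    have j01: "j = 0 \<or> j = 1" using True by linarith
    have "(i, 1 - j) \<in> ?X" using j01 v by (elim disjE) (auto simp: cart_adj_def K_adj_def)
    moreover have "(k, j) \<in> ?X" using True v assms by (auto simp: cart_adj_def K_adj_def k_def)
    moreover have "(i, 1-j) \<noteq> (k, j)" using j01 by auto
    ultimately show ?thesis by (rule card2I[OF fx])
  next
    case False
    have "(i, 0) \<in> ?X" "(i, 1) \<in> ?X" using False v by (auto simp: cart_adj_def K_adj_def)
    then show ?thesis by (rule card2I[OF fx]) simp
  qed
qed

theorem proposition4:
  fixes n m :: nat
  assumes "2 \<le> n" and "n \<le> m"
  shows "gamma_2t (KK_vertices n m) (cart_adj K_adj K_adj) \<ge> min (m + 2) (2 * n)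
     \<and> (m \<ge> 2 * n - 2 \<longrightarrow> gamma_2t (KK_vertices n m) (cart_adj K_adj K_adj) = 2 * n)"
proof -
  let ?S0 = "{0..<n} \<times> {0::nat,1}"
  have T0: "total_k_dominating (KK_vertices n m) (cart_adj K_adj K_adj) 2 ?S0"
    using upper_set[OF assms] .
  have c0: "card ?S0 = 2 * n" by (simp add: card_cartesian_product)
  have ex: "\<exists>c S. total_k_dominating (KK_vertices n m) (cart_adj K_adj K_adj) 2 S \<and> card S = c"
    using T0 by blast
  obtain S where S: "total_k_dominating (KK_vertices n m) (cart_adj K_adj K_adj) 2 S"
    "card S = gamma_2t (KK_vertices n m) (cart_adj K_adj K_adj)"
    using LeastI_ex[OF ex] unfolding gamma_2t_def by blast
  have lo: "min (m + 2) (2 * n) \<le> gamma_2t (KK_vertices n m) (cart_adj K_adj K_adj)"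
    using lower[OF assms S(1)] S(2) by simp
  have up: "gamma_2t (KK_vertices n m) (cart_adj K_adj K_adj) \<le> 2 * n"
    unfolding gamma_2t_def using T0 c0 by (intro Least_le) (rule exI[of _ ?S0], simp)
  have "m \<ge> 2 * n - 2 \<Longrightarrow> min (m + 2) (2 * n) = 2 * n" by simp
  then show ?thesis using lo up by (metis le_antisym)
qed

end
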